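(* Let $\epsilon>0$, $M\ge1$, and let $h^{\mathrm{Dir}}$ be the solution of the Dirichlet problem on ${\mathbb T}^{(M)}$ with the boundary condition $u$ below. Then for every $0\le n\le M$ and all distinct $z,y\in\{0,1\}^n$, $$|h^{\mathrm{Dir}}(z)-h^{\mathrm{Dir}}(y)|\ge\epsilon .$$
   Context: Binary tree: for $n\ge0$, $\{0,1\}^n$ is the set of vertices of generation $n$ (words $z=z_1\cdots z_n$; generation $0$ is the root $\emptyset$). For a vertex $z$ of generation $n$, its children are $z0,z1$, and for $0\le m\le n$, $z^{(m)}=z_1\cdots z_m$ is its ancestor in generation $m$. ${\mathbb T}^{(M)}$ is the tree of generations $0,\dots,M$. Dirichlet problem: given $M\ge1$ and $u:\{0,1\}^M\to\mathbb R$, its solution is the unique $h$ on the vertices of ${\mathbb T}^{(M)}$ with $h(\emptyset)=0$, $h(z)=u(z)$ for $z\in\{0,1\}^M$, and $h(z0)+h(z1)+h(z^{(n-1)})=3h(z)$ for all $z\in\{0,1\}^n$, $1\le n<M$. Boundary condition: $u(z)=\epsilon\sum_{\ell=2}^M2^{M-\ell}z_\ell+\tfrac12\epsilon$ if $z_1=1$, and $u(z)=-\epsilon\sum_{\ell=2}^M2^{M-\ell}z_\ell-\tfrac12\epsilon$ if $z_1=0$. *)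

theory Defs
  imports Main "HOL-Library.Multiset" Complex_Main
begin

text \<open>Vertices of the binary tree: words z = z_1 ... z_n over {0,1}, encoded as
  bool lists (True = 1), with z_l = z ! (l - 1). Generation n = lists of length n;
  the root is the empty list. Children of z are z @ [False] (= z0) and z @ [True] (= z1);
  the ancestor z^(n-1) of z in generation n is butlast z.\<close>

definition boundary_u :: "real \<Rightarrow> nat \<Rightarrow> bool list \<Rightarrow> real" where
  "boundary_u eps M z =
     (let s = (\<Sum>l = 2..M. 2 ^ (M - l) * of_bool (z ! (l - 1)))
      in if z ! 0 then eps * s + eps / 2 else - eps * s - eps / 2)"

definition dirichlet_solution :: "nat \<Rightarrow> (bool list \<Rightarrow> real) \<Rightarrow> (bool list \<Rightarrow> real) \<Rightarrow> bool" where
  "dirichlet_solution M u h \<longleftrightarrow>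
     h [] = 0 \<and>
     (\<forall>z. length z = M \<longrightarrow> h z = u z) \<and>
     (\<forall>z. 1 \<le> length z \<and> length z < M \<longrightarrow>
          h (z @ [False]) + h (z @ [True]) + h (butlast z) = 3 * h z)"

end

theory Submission imports Defs begin

lemma maxp_le:
  fixes d :: "bool list \<Rightarrow> real"
  assumes d0: "d [] = 0" and dM: "\<And>z. length z = M \<Longrightarrow> d z = 0"
    and dI: "\<And>z. 1 \<le> length z \<Longrightarrow> length z < M \<Longrightarrow>
          d (z @ [False]) + d (z @ [True]) + d (butlast z) = 3 * d z"
  shows "\<forall>z. length z \<le> M \<longrightarrow> d z \<le> 0"
proof (rule ccontr)
  assume "\<not> ?thesis"
  then obtain w where w: "length w \<le> M" "d w > 0" by auto
  define S where "S = {z :: bool list. length z \<le> M}"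
  have fS: "finite S" using finite_lists_length_le[of "UNIV::bool set" M] unfolding S_def by simp
  define m where "m = Max (d ` S)"
  have wS: "w \<in> S" using w by (simp add: S_def)
  have mge: "\<And>z. z \<in> S \<Longrightarrow> d z \<le> m" unfolding m_def using fS by auto
  have mpos: "m > 0" using mge[OF wS] w by auto
  have "m \<in> d ` S" unfolding m_def using fS wS by (intro Max_in) auto
  then have ex: "\<exists>z. z \<in> S \<and> d z = m" by auto
  obtain k where k: "\<exists>z. z \<in> S \<and> d z = m \<and> length z = k"
      and kmin: "\<And>k'. k' < k \<Longrightarrow> \<not> (\<exists>z. z \<in> S \<and> d z = m \<and> length z = k')"
    using ex_has_least_nat[of "\<lambda>k. \<exists>z. z \<in> S \<and> d z = m \<and> length z = k" "length (SOME z. z \<in> S \<and> d z = m)" "\<lambda>x. x"]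
    ex by (metis (mono_tags, lifting) not_less someI_ex)
  then obtain z where z: "z \<in> S" "d z = m" "length z = k" by auto
  have "k \<noteq> 0" using z d0 mpos by auto
  moreover have "k \<noteq> M" using z dM mpos by auto
  ultimately have i: "1 \<le> length z" "length z < M" using z by (auto simp: S_def)
  have e: "d (z @ [False]) + d (z @ [True]) + d (butlast z) = 3 * m" using dI[OF i] z by simp
  have "d (z @ [False]) \<le> m" "d (z @ [True]) \<le> m" "d (butlast z) \<le> m"
    using mge i by (auto simp: S_def)
  then have "d (butlast z) = m" using e by linarith
  moreover have "butlast z \<in> S" "length (butlast z) < k" using i z by (auto simp: S_def)
  ultimately show False using kmin by blast
qed


definition sg :: "bool \<Rightarrow> real" where "sg b = (if b then 1 else -1)"
definition tau :: "nat \<Rightarrow> bool list \<Rightarrow> real" where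
  "tau l z = sg (z!0) * (if l = 1 then 1 else sg (z!(l-1)))"
definition qq :: "nat \<Rightarrow> real" where "qq m = 2 - (1/2)^m"
definition bet :: "nat \<Rightarrow> nat \<Rightarrow> nat \<Rightarrow> real" where
  "bet M n j = (if j \<le> n then 2^(M-j) * qq (n-j) / qq (M-j) else 0)"
definition gfun :: "real \<Rightarrow> nat \<Rightarrow> bool list \<Rightarrow> real" where
  "gfun eps M z = eps/2 * (\<Sum>l=1..M. bet M (length z) l * tau l z)"

lemma qq_pos: "qq m > 0"
proof -
  have "(1/2::real)^m \<le> 1" by (simp add: power_le_one)
  then show ?thesis by (simp add: qq_def)
qed

lemma qq_rec: "2 * qq (Suc (Suc m)) - 3 * qq (Suc m) + qq m = 0"
  by (simp add: qq_def)

lemma bet_nonneg: "bet M n j \<ge> 0"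
  using qq_pos[of "n-j"] qq_pos[of "M-j"] by (simp add: bet_def)

lemma bet_rec:
  assumes "1 \<le> n" "j \<noteq> n+1"
  shows "2*bet M (n+1) j - 3*bet M n j + bet M (n-1) j = 0"
proof -
  consider "j > n+1" | "j = n" | "j < n" using assms by linarith
  then show ?thesis
  proof cases
    case 1 then show ?thesis by (auto simp add: bet_def)
  next
    case 2
    have q0: "qq 0 = 1" and q1: "qq (Suc 0) = 3/2" by (simp_all add: qq_def)
    have "\<not> n \<le> n - 1" using assms by linarith
    then show ?thesis using 2 assms by (simp add: bet_def q0 q1)
  next
    case 3
    then obtain m where m: "n - j = Suc m" "n + 1 - j = Suc (Suc m)" "n - 1 - j = m"
      by (metis Suc_diff_Suc Suc_eq_plus1 add_diff_cancel_right' diff_Suc_1 diff_Suc_eq_diff_pred le_add_diff_inverse2 less_imp_le_nat Nat.add_diff_assoc2)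
    have jj: "j \<le> n - 1" using 3 by linarith
    have "2*bet M (n+1) j - 3*bet M n j + bet M (n-1) j
        = 2^(M-j) / qq (M-j) * (2 * qq (Suc (Suc m)) - 3 * qq (Suc m) + qq m)"
      using 3 m qq_pos[of "M-j"] jj by (simp add: bet_def add_divide_distrib diff_divide_distrib algebra_simps)
    then show ?thesis by (simp add: qq_rec)
  qed
qed

lemma tau_app: "1 \<le> l \<Longrightarrow> l \<le> length z \<Longrightarrow> tau l (z @ [b]) = tau l z"
  unfolding tau_def by (cases z) (auto simp: nth_append)

lemma tau_butlast: "1 \<le> l \<Longrightarrow> l < length z \<Longrightarrow> tau l (butlast z) = tau l z"
  by (simp add: tau_def nth_butlast)

lemma tau_new: "1 \<le> length z \<Longrightarrow> tau (length z + 1) (z @ [False]) + tau (length z + 1) (z @ [True]) = 0"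
  by (simp add: tau_def nth_append sg_def)

lemma bet_zero: "j > n \<Longrightarrow> bet M n j = 0" by (simp add: bet_def)

lemma term_eq:
  assumes l: "1 \<le> l" and n: "1 \<le> length z"
  shows "bet M (length z+1) l * tau l (z@[False]) + bet M (length z+1) l * tau l (z@[True])
       + bet M (length z-1) l * tau l (butlast z) = 3 * (bet M (length z) l * tau l z)"
proof -
  define n where "n = length z"
  consider "l < n" | "l = n" | "l = n+1" | "l > n+1" by linarith
  then show ?thesis
  proof cases
    case 1
    have r: "2*bet M (n+1) l - 3*bet M n l + bet M (n-1) l = 0" using bet_rec[of n l M] 1 n n_def by simp
    have "bet M (n+1) l * tau l (z@[False]) + bet M (n+1) l * tau l (z@[True])
       + bet M (n-1) l * tau l (butlast z) = (2*bet M (n+1) l + bet M (n-1) l) * tau l z"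
      using 1 l by (simp add: n_def tau_app tau_butlast algebra_simps)
    also have "\<dots> = 3 * (bet M n l * tau l z)" using r by (simp add: algebra_simps)
    finally show ?thesis by (simp add: n_def)
  next
    case 2
    have r: "2*bet M (n+1) l - 3*bet M n l + bet M (n-1) l = 0" using bet_rec[of n l M] 2 n n_def by simp
    have z0: "bet M (n-1) l = 0" using 2 n n_def by (simp add: bet_zero)
    have "bet M (n+1) l * tau l (z@[False]) + bet M (n+1) l * tau l (z@[True])
       + bet M (n-1) l * tau l (butlast z) = (2*bet M (n+1) l) * tau l z"
      using 2 l z0 by (simp add: n_def tau_app algebra_simps)
    also have "\<dots> = 3 * (bet M n l * tau l z)" using r z0 by (simp add: algebra_simps)
    finally show ?thesis by (simp add: n_def)
  next
    case 3
    have "bet M (n+1) l * tau l (z@[False]) + bet M (n+1) l * tau l (z@[True])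
       = bet M (n+1) l * (tau (n+1) (z@[False]) + tau (n+1) (z@[True]))"
      using 3 by (simp add: algebra_simps)
    also have "\<dots> = 0" using tau_new[OF n] n_def by simp
    finally show ?thesis using 3 by (simp add: n_def bet_zero)
  next
    case 4 then show ?thesis by (simp add: n_def bet_zero)
  qed
qed

lemma gfun_harm:
  assumes "1 \<le> length z"
  shows "gfun eps M (z @ [False]) + gfun eps M (z @ [True]) + gfun eps M (butlast z) = 3 * gfun eps M z"
proof -
  have "gfun eps M (z @ [False]) + gfun eps M (z @ [True]) + gfun eps M (butlast z)
      = eps/2 * (\<Sum>l=1..M. bet M (length z+1) l * tau l (z@[False]) + bet M (length z+1) l * tau l (z@[True])
       + bet M (length z-1) l * tau l (butlast z))"
    by (simp add: gfun_def sum.distrib algebra_simps)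
  also have "\<dots> = eps/2 * (\<Sum>l=1..M. 3 * (bet M (length z) l * tau l z))"
    using term_eq[OF _ assms] by (intro arg_cong[where f="\<lambda>x. eps/2 * x"] sum.cong) auto
  also have "\<dots> = 3 * gfun eps M z" unfolding gfun_def sum_distrib_left[symmetric] by simp
  finally show ?thesis .
qed

lemma gfun_root: "gfun eps M [] = 0"
  by (simp add: gfun_def bet_def)

lemma geo: "a \<le> M \<Longrightarrow> (\<Sum>l=Suc a..M. (2::real)^(M-l)) = 2^(M-a) - 1"
proof (induction M)
  case 0 then show ?case by simp
next
  case (Suc M)
  show ?case
  proof (cases "a = Suc M")
    case True then show ?thesis by simp
  next
    case False
    then have a: "a \<le> M" using Suc by simp
    have "(\<Sum>l=Suc a..Suc M. (2::real)^(Suc M-l)) = (\<Sum>l=Suc a..M. (2::real)^(Suc M-l)) + 1"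
      using a by (simp add: sum.cl_ivl_Suc)
    also have "(\<Sum>l=Suc a..M. (2::real)^(Suc M-l)) = (\<Sum>l=Suc a..M. 2 * (2::real)^(M-l))"
      by (intro sum.cong) (auto simp: Suc_diff_le)
    also have "\<dots> = 2 * (2^(M-a) - 1)" using Suc.IH[OF a] by (simp add: sum_distrib_left[symmetric])
    finally show ?thesis using a by (simp add: Suc_diff_le)
  qed
qed

lemma gfun_bd:
  assumes "length z = M" "1 \<le> M"
  shows "gfun eps M z = boundary_u eps M z"
proof -
  define s where "s = (\<Sum>l = 2..M. 2 ^ (M - l) * of_bool (z ! (l - 1)) :: real)"
  have bu: "boundary_u eps M z = sg (z!0) * eps * (s + 1/2)"
    by (simp add: boundary_u_def s_def sg_def Let_def algebra_simps)
  have "(\<Sum>l=1..M. bet M M l * tau l z) = (\<Sum>l=1..M. 2^(M-l) * tau l z)"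
    using qq_pos by (intro sum.cong) (auto simp: bet_def dest: sym, metis less_irrefl)
  also have "\<dots> = 2^(M-1) * tau 1 z + (\<Sum>l=2..M. 2^(M-l) * tau l z)"
    using assms(2) by (simp add: sum.atLeast_Suc_atMost numeral_2_eq_2)
  also have "(\<Sum>l=2..M. 2^(M-l) * tau l z) = (\<Sum>l=2..M. sg (z!0) * (2 * (2 ^ (M - l) * of_bool (z ! (l - 1))) - 2^(M-l)))"
    by (intro sum.cong) (auto simp: tau_def sg_def)
  also have "\<dots> = sg (z!0) * (2 * s - (\<Sum>l=2..M. (2::real)^(M-l)))"
    unfolding s_def sum_distrib_left[symmetric] sum_subtractf by (simp only: sum_distrib_left)
  also have "(\<Sum>l=2..M. (2::real)^(M-l)) = 2^(M-1) - 1"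
    using geo[of 1 M] assms(2) by (simp add: numeral_2_eq_2)
  finally have "(\<Sum>l=1..M. bet M M l * tau l z) = sg (z!0) * (2 * s + 1)"
    by (simp add: tau_def algebra_simps)
  then show ?thesis using assms(1) bu by (simp add: gfun_def algebra_simps)
qed


definition Fv :: "nat \<Rightarrow> nat \<Rightarrow> nat \<Rightarrow> real" where
  "Fv M l n = bet M n l - (\<Sum>j=Suc l..M. bet M n j)"

lemma Fv_M: "l \<le> M \<Longrightarrow> Fv M l M = 1"
proof -
  assume l: "l \<le> M"
  have "(\<Sum>j=Suc l..M. bet M M j) = (\<Sum>j=Suc l..M. (2::real)^(M-j))"
    using qq_pos by (intro sum.cong) (auto simp: bet_def dest: sym, metis less_irrefl)
  also have "\<dots> = 2^(M-l) - 1" using geo[OF l] .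
  finally show ?thesis using l qq_pos[of "M-l"] by (simp add: Fv_def bet_def)
qed

lemma Fv_rec:
  assumes "1 \<le> l" "l < n" "n+1 \<le> M"
  shows "2 * Fv M l (n+1) - 3 * Fv M l n + Fv M l (n-1) = - 2 * bet M (n+1) (n+1)"
proof -
  have r0: "2*bet M (n+1) l - 3*bet M n l + bet M (n-1) l = 0" using bet_rec[of n l M] assms by simp
  have rj: "2*bet M (n+1) j - 3*bet M n j + bet M (n-1) j = (if j = n+1 then 2 * bet M (n+1) (n+1) else 0)" for j
  proof (cases "j = n+1")
    case True then show ?thesis by (simp add: bet_zero)
  next
    case False then show ?thesis using bet_rec[of n j M] assms by simp
  qed
  have "2 * Fv M l (n+1) - 3 * Fv M l n + Fv M l (n-1)
     = (2*bet M (n+1) l - 3*bet M n l + bet M (n-1) l)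
       - (\<Sum>j=Suc l..M. 2*bet M (n+1) j - 3*bet M n j + bet M (n-1) j)"
    by (simp add: Fv_def sum.distrib sum_subtractf sum_distrib_left algebra_simps)
  also have "\<dots> = - (\<Sum>j=Suc l..M. (if j = n+1 then 2 * bet M (n+1) (n+1) else 0))"
    using r0 rj by simp
  also have "\<dots> = - 2 * bet M (n+1) (n+1)"
    using assms by (simp add: sum.delta)
  finally show ?thesis .
qed

lemma D_base:
  assumes "1 \<le> l" "l+1 \<le> M"
  shows "Fv M l l - Fv M l (l+1) \<ge> 0"
proof -
  have r: "2*bet M (l+1) l - 3*bet M l l + bet M (l-1) l = 0" using bet_rec[of l l M] assms by simp
  have z: "bet M (l-1) l = 0" using assms by (simp add: bet_zero)
  have s1: "(\<Sum>j=Suc l..M. bet M l j) = 0" by (simp add: bet_zero)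
  have s2: "(\<Sum>j=Suc l..M. bet M (l+1) j) = bet M (l+1) (l+1)"
    using assms by (simp add: sum.atLeast_Suc_atMost bet_zero)
  have D: "Fv M l l - Fv M l (l+1) = bet M (l+1) (l+1) - bet M l l / 2"
    using r z s1 s2 by (simp add: Fv_def)
  obtain k where k: "M - l = Suc k" "M - (l+1) = k" using assms
    by (metis Suc_diff_Suc Suc_eq_plus1 diff_diff_left less_eq_Suc_le)
  have qk: "qq k \<le> qq (Suc k)" by (simp add: qq_def)
  have q0: "qq 0 = 1" by (simp add: qq_def)
  have "bet M l l / 2 = 2^k / qq (Suc k)" using k by (simp add: bet_def q0)
  also have "\<dots> \<le> 2^k / qq k" using qk qq_pos[of k] by (intro divide_left_mono) auto
  also have "\<dots> = bet M (l+1) (l+1)" using k by (simp add: bet_def qq_def)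
  finally show ?thesis using D by simp
qed

lemma D_all:
  assumes "1 \<le> l" "l + k + 1 \<le> M"
  shows "Fv M l (l+k) - Fv M l (l+k+1) \<ge> 0"
  using assms
proof (induction k)
  case 0 then show ?case using D_base[of l M] by simp
next
  case (Suc k)
  have ih: "Fv M l (l+k) - Fv M l (l+k+1) \<ge> 0" using Suc by simp
  have r: "2 * Fv M l (l+k+1+1) - 3 * Fv M l (l+k+1) + Fv M l (l+k+1-1) = - 2 * bet M (l+k+1+1) (l+k+1+1)"
    using Fv_rec[of l "l+k+1" M] Suc.prems by simp
  have "bet M (l+k+1+1) (l+k+1+1) \<ge> 0" by (rule bet_nonneg)
  then show ?case using r ih by simp
qed

lemma Fv_ge:
  assumes "1 \<le> l" "l \<le> n" "n \<le> M"
  shows "Fv M l n \<ge> 1"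
proof -
  have "\<forall>n. l \<le> n \<and> n \<le> M \<and> M - n = k \<longrightarrow> Fv M l n \<ge> 1" for k
  proof (induction k)
    case 0 then show ?case using Fv_M by auto
  next
    case (Suc k)
    show ?case
    proof (intro allI impI)
      fix n assume n: "l \<le> n \<and> n \<le> M \<and> M - n = Suc k"
      then have "Suc n \<le> M \<and> M - Suc n = k" by arith
      then have A: "Fv M l (n+1) \<ge> 1" using Suc.IH[rule_format, of "n+1"] n by simp
      obtain k' where k': "n = l + k'" using n le_Suc_ex by blast
      have "l + k' + 1 \<le> M" using n k' by arith
      then have "Fv M l n - Fv M l (n+1) \<ge> 0" using D_all[of l k' M] assms k' by simp
      with A show "Fv M l n \<ge> 1" by simp
    qed
  qed
  then show ?thesis using assms by blast
qed


lemma tau_pm: "\<bar>tau l z\<bar> = 1"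
  by (simp add: tau_def sg_def abs_mult)

lemma gap:
  assumes eps: "eps > 0" and len: "length z = n" "length y = n" and nM: "n \<le> M" and ne: "z \<noteq> y"
  shows "\<bar>gfun eps M z - gfun eps M y\<bar> \<ge> eps"
proof -
  have ex: "\<exists>i. i < n \<and> z!i \<noteq> y!i" using ne len nth_equalityI[of z y] by auto
  define i where "i = (LEAST i. i < n \<and> z!i \<noteq> y!i)"
  have i: "i < n" "z!i \<noteq> y!i" using LeastI_ex[OF ex] by (auto simp: i_def)
  have below: "z!j = y!j" if "j < i" for j
  proof (rule ccontr)
    assume "z!j \<noteq> y!j"
    moreover have "j < n" using that i by simp
    ultimately have "i \<le> j" unfolding i_def by (intro Least_le) simp
    then show False using that by simp
  qed
  define l where "l = i + 1"
  have l: "1 \<le> l" "l \<le> n" using i by (auto simp: l_def)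
  have same: "tau j z = tau j y" if "1 \<le> j" "j < l" for j
  proof -
    have "z!0 = y!0" using below that by (auto simp: l_def)
    moreover have "z!(j-1) = y!(j-1)" using below that by (auto simp: l_def)
    ultimately show ?thesis by (simp add: tau_def)
  qed
  have diffl: "\<bar>tau l z - tau l y\<bar> = 2"
  proof (cases "i = 0")
    case True then show ?thesis using i by (cases "z!0"; cases "y!0") (auto simp: l_def tau_def sg_def)
  next
    case False
    then have "z!0 = y!0" using below by auto
    then show ?thesis using i False by (cases "z!0"; cases "z!i"; cases "y!i") (auto simp: l_def tau_def sg_def)
  qed
  define d where "d j = bet M n j * (tau j z - tau j y)" for j
  have "gfun eps M z - gfun eps M y = eps/2 * (\<Sum>j=1..M. d j)"
    using len by (simp add: gfun_def d_def sum_subtractf algebra_simps)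
  also have "(\<Sum>j=1..M. d j) = (\<Sum>j=l..M. d j)"
    using same l by (intro sum.mono_neutral_right) (auto simp: d_def)
  also have "\<dots> = d l + (\<Sum>j=Suc l..M. d j)"
    using l nM by (simp add: sum.atLeast_Suc_atMost)
  finally have eq: "gfun eps M z - gfun eps M y = eps/2 * (d l + (\<Sum>j=Suc l..M. d j))" .
  have dl: "\<bar>d l\<bar> = 2 * bet M n l" using diffl bet_nonneg[of M n l] by (simp add: d_def abs_mult)
  have dj: "\<bar>d j\<bar> \<le> 2 * bet M n j" for j
  proof -
    have "\<bar>tau j z - tau j y\<bar> \<le> 2" using tau_pm[of j z] tau_pm[of j y] by linarith
    then show ?thesis using bet_nonneg[of M n j] by (simp add: d_def abs_mult) (metis mult.commute mult_left_mono)
  qed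
  have "\<bar>\<Sum>j=Suc l..M. d j\<bar> \<le> (\<Sum>j=Suc l..M. 2 * bet M n j)"
    using dj by (intro order_trans[OF sum_abs] sum_mono) auto
  then have "\<bar>d l + (\<Sum>j=Suc l..M. d j)\<bar> \<ge> 2 * Fv M l n"
    using dl by (simp add: Fv_def sum_distrib_left[symmetric])
  moreover have "Fv M l n \<ge> 1" using Fv_ge l nM by simp
  ultimately have "\<bar>d l + (\<Sum>j=Suc l..M. d j)\<bar> \<ge> 2" by simp
  then have "eps/2 * 2 \<le> eps/2 * \<bar>d l + (\<Sum>j=Suc l..M. d j)\<bar>" using eps by (intro mult_left_mono) auto
  also have "\<dots> = \<bar>gfun eps M z - gfun eps M y\<bar>" unfolding eq using eps by (simp add: abs_mult)
  finally show ?thesis by simp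
qed

theorem lemma2p4:
  fixes eps :: real and M :: nat and h :: "bool list \<Rightarrow> real"
  assumes "eps > 0" and "M \<ge> 1"
    and "dirichlet_solution M (boundary_u eps M) h"
  shows "\<forall>n \<le> M. \<forall>z y. length z = n \<and> length y = n \<and> z \<noteq> y \<longrightarrow> \<bar>h z - h y\<bar> \<ge> eps"
proof -
  note ds = assms(3)[unfolded dirichlet_solution_def]
  define d where "d z = h z - gfun eps M z" for z
  have d0: "d [] = 0" using ds by (simp add: d_def gfun_root)
  have dM: "\<And>z. length z = M \<Longrightarrow> d z = 0" using ds gfun_bd assms(2) by (simp add: d_def)
  have dI: "\<And>z. 1 \<le> length z \<Longrightarrow> length z < M \<Longrightarrow>
          d (z @ [False]) + d (z @ [True]) + d (butlast z) = 3 * d z"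
    using ds gfun_harm by (simp add: d_def algebra_simps)
  have le1: "\<forall>z. length z \<le> M \<longrightarrow> d z \<le> 0" by (rule maxp_le[OF d0 dM dI])
  have le2: "\<forall>z. length z \<le> M \<longrightarrow> (\<lambda>z. - d z) z \<le> 0"
    by (rule maxp_le) (use d0 dM dI in \<open>auto simp: algebra_simps\<close>)
  have hg: "\<And>z. length z \<le> M \<Longrightarrow> h z = gfun eps M z"
    using le1 le2 by (force simp: d_def)
  show ?thesis
  proof (intro allI impI)
    fix n and z y :: "bool list" assume n: "n \<le> M" and zy: "length z = n \<and> length y = n \<and> z \<noteq> y"
    then show "\<bar>h z - h y\<bar> \<ge> eps" using gap[OF assms(1), of z n y M] hg by simp
  qed
qed

end
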